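(* Let $(X,T)$ be a dynamical system. The following are equivalent: (1) $(X,T)$ is weakly mixing; (2) there exists a dense $G_\delta$ subset $X'$ of $X$ such that for each $x\in X'$ and all opene $G,U,V\subset X$, the set $n_T(x,G)\cap N_T(U,V)$ is an IP set.
   Context: A dynamical system $(X,T)$: $X$ is a compact metric space with more than one point and without isolated points, $T:X\to X$ a continuous surjection. "Opene" means open and nonempty. $N_T(U,V)=\{n\in\mathbb{Z}_+:U\cap T^{-n}V\neq\varnothing\}$, $n_T(x,G)=\{n\in\mathbb{Z}_+:T^nx\in G\}$. $(X,T)$ is weakly mixing if $(X\times X,T\times T)$ is transitive (i.e. $N_{T\times T}(A,B)\neq\varnothing$ for all opene $A,B\subset X\times X$). A set $\mathcal{S}\subset\mathbb{N}$ is an IP set if there is a sequence $(p_i)_{i\ge1}$ in $\mathbb{N}$ with $\{p_{i_1}+\dots+p_{i_k}:k\in\mathbb{N},\ 1\le i_1<\dots<i_k\}\subset\mathcal{S}$. *)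

theory Defs
  imports "HOL-Analysis.Analysis"
begin

definition dyn_system :: "'a::metric_space set \<Rightarrow> ('a \<Rightarrow> 'a) \<Rightarrow> bool" where
  "dyn_system X T \<longleftrightarrow> compact X \<and> (\<exists>x\<in>X. \<exists>y\<in>X. x \<noteq> y) \<and>
     (\<forall>x\<in>X. x islimpt X) \<and> continuous_on X T \<and> T ` X = X"

definition opene_in :: "'a::topological_space set \<Rightarrow> 'a set \<Rightarrow> bool" where
  "opene_in Y U \<longleftrightarrow> openin (top_of_set Y) U \<and> U \<noteq> {}"

definition hitting_times :: "'a set \<Rightarrow> ('a \<Rightarrow> 'a) \<Rightarrow> 'a set \<Rightarrow> 'a set \<Rightarrow> nat set" where
  "hitting_times X T U V = {n. U \<inter> {x \<in> X. (T ^^ n) x \<in> V} \<noteq> {}}"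

definition visit_times :: "('a \<Rightarrow> 'a) \<Rightarrow> 'a \<Rightarrow> 'a set \<Rightarrow> nat set" where
  "visit_times T x G = {n. (T ^^ n) x \<in> G}"

definition weakly_mixing :: "'a::metric_space set \<Rightarrow> ('a \<Rightarrow> 'a) \<Rightarrow> bool" where
  "weakly_mixing X T \<longleftrightarrow>
     (\<forall>A B. opene_in (X \<times> X) A \<longrightarrow> opene_in (X \<times> X) B \<longrightarrow>
        hitting_times (X \<times> X) (\<lambda>(x, y). (T x, T y)) A B \<noteq> {})"

text \<open>IP set: contains all finite sums p_{i1}+...+p_{ik}, i1<...<ik, of some sequence
of positive integers, i.e. sums over finite nonempty index sets.\<close>
definition IP_set :: "nat set \<Rightarrow> bool" where
  "IP_set S \<longleftrightarrow> (\<exists>p :: nat \<Rightarrow> nat. (\<forall>i. p i \<ge> 1) \<and>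
     (\<forall>I. finite I \<and> I \<noteq> {} \<longrightarrow> sum p I \<in> S))"

end

theory Submission
  imports Defs
begin

lemma ds_maps:
  assumes "dyn_system X T"
  shows "(T ^^ n) ` X \<subseteq> X"
proof (induction n)
  case 0 then show ?case by simp
next
  case (Suc n)
  have "T ` X \<subseteq> X" using assms unfolding dyn_system_def by blast
  with Suc show ?case by (auto simp: image_subset_iff)
qed

lemma ds_cont:
  assumes "dyn_system X T"
  shows "continuous_on X (T ^^ n)"
proof (induction n)
  case 0 then show ?case by (simp add: continuous_on_id)
next
  case (Suc n)
  have "continuous_on ((T^^n) ` X) T"
    using assms ds_maps[OF assms] unfolding dyn_system_def
    by (meson continuous_on_subset)
  then have "continuous_on X (T \<circ> (T^^n))"
    using continuous_on_compose[OF Suc] by blast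
  then show ?case by simp
qed

lemma opene_sub: "opene_in X W \<Longrightarrow> W \<subseteq> X"
  unfolding opene_in_def by (meson openin_imp_subset)

lemma ds_pre:
  assumes "dyn_system X T" "openin (top_of_set X) W"
  shows "openin (top_of_set X) {x\<in>X. (T^^n) x \<in> W}"
proof -
  obtain Ob where O: "open Ob" "W = X \<inter> Ob" using assms(2) by (auto simp: openin_open)
  have "{x\<in>X. (T^^n) x \<in> W} = X \<inter> (T^^n) -` Ob"
    using ds_maps[OF assms(1), of n] O by auto
  then show ?thesis using continuous_openin_preimage_gen[OF ds_cont[OF assms(1)] O(1)] by simp
qed

lemma prod_iter:
  fixes T :: "'a \<Rightarrow> 'a"
  shows "((\<lambda>(x, y). (T x, T y)) ^^ n) (a, b) = ((T ^^ n) a, (T ^^ n) b)"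
  by (induction n) auto

lemma hit_iff: "n \<in> hitting_times X T U V \<longleftrightarrow> (\<exists>u\<in>U. u \<in> X \<and> (T^^n) u \<in> V)"
  unfolding hitting_times_def by auto

lemma funpow_comm: "(T^^n) ((T^^m) w) = (T^^m) ((T^^n) w)"
  by (metis funpow_add add.commute comp_apply)

lemma funpow_add_app: "(T^^(a + b)) w = (T^^a) ((T^^b) w)"
  by (simp add: funpow_add)

lemma wm_pair:
  assumes "weakly_mixing X T" "opene_in X U1" "opene_in X V1" "opene_in X U2" "opene_in X V2"
  shows "\<exists>n. n \<in> hitting_times X T U1 V1 \<and> n \<in> hitting_times X T U2 V2"
proof -
  have "opene_in (X\<times>X) (U1\<times>U2)" "opene_in (X\<times>X) (V1\<times>V2)"
    using assms by (auto simp: opene_in_def openin_Times)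
  then obtain n where "n \<in> hitting_times (X\<times>X) (\<lambda>(x,y). (T x, T y)) (U1\<times>U2) (V1\<times>V2)"
    using assms(1) unfolding weakly_mixing_def by blast
  then have "n \<in> hitting_times X T U1 V1 \<and> n \<in> hitting_times X T U2 V2"
    by (auto simp: hitting_times_def prod_iter)
  then show ?thesis by blast
qed

lemma wm_inter:
  assumes ds: "dyn_system X T" and wm: "weakly_mixing X T"
    and o: "opene_in X U1" "opene_in X V1" "opene_in X U2" "opene_in X V2"
  shows "\<exists>U V. opene_in X U \<and> opene_in X V \<and>
     hitting_times X T U V \<subseteq> hitting_times X T U1 V1 \<inter> hitting_times X T U2 V2"
proof -
  obtain m where m: "m \<in> hitting_times X T U1 U2" "m \<in> hitting_times X T V1 V2"
    using wm_pair[OF wm o(1) o(3) o(2) o(4)] by blast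
  define U where "U = U1 \<inter> {x\<in>X. (T^^m) x \<in> U2}"
  define V where "V = V1 \<inter> {x\<in>X. (T^^m) x \<in> V2}"
  have "opene_in X U" "opene_in X V"
    using o m ds_pre[OF ds, of U2 m] ds_pre[OF ds, of V2 m]
    unfolding U_def V_def opene_in_def hit_iff by (auto intro!: openin_Int)
  moreover have "hitting_times X T U V \<subseteq> hitting_times X T U1 V1 \<inter> hitting_times X T U2 V2"
  proof
    fix n assume "n \<in> hitting_times X T U V"
    then obtain w where w: "w \<in> U" "w \<in> X" "(T^^n) w \<in> V" by (auto simp: hit_iff)
    have "(T^^n) ((T^^m) w) \<in> V2" using w(3) funpow_comm[where T=T and n=n and m=m and w=w] by (simp add: V_def)
    moreover have "(T^^m) w \<in> X" using ds_maps[OF ds, of m] w(2) by blast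
    ultimately show "n \<in> hitting_times X T U1 V1 \<inter> hitting_times X T U2 V2"
      using w by (auto simp: hit_iff U_def V_def)
  qed
  ultimately show ?thesis by blast
qed

lemma ds_disjoint:
  assumes "dyn_system X T"
  shows "\<exists>A B. opene_in X A \<and> opene_in X B \<and> A \<inter> B = {}"
proof -
  obtain x y where xy: "x \<in> X" "y \<in> X" "x \<noteq> y" using assms unfolding dyn_system_def by blast
  define d where "d = dist x y / 2"
  have d: "d > 0" using xy by (simp add: d_def)
  have "opene_in X (X \<inter> ball x d)" "opene_in X (X \<inter> ball y d)"
    using xy d by (auto simp: opene_in_def openin_open_Int)
  moreover have "(X \<inter> ball x d) \<inter> (X \<inter> ball y d) = {}"
  proof (rule ccontr)
    assume "\<not> ?thesis"
    then obtain z where "dist x z < d" "dist y z < d" by auto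
    then have "dist x y < 2 * d" by (metis dist_commute dist_triangle_lt add_strict_mono mult_2)
    then show False by (simp add: d_def)
  qed
  ultimately show ?thesis by blast
qed

lemma wm_pos:
  assumes ds: "dyn_system X T" and wm: "weakly_mixing X T"
    and o: "opene_in X U1" "opene_in X V1" "opene_in X U2" "opene_in X V2"
  shows "\<exists>n\<ge>1. n \<in> hitting_times X T U1 V1 \<and> n \<in> hitting_times X T U2 V2"
proof -
  obtain U V where UV: "opene_in X U" "opene_in X V"
    "hitting_times X T U V \<subseteq> hitting_times X T U1 V1 \<inter> hitting_times X T U2 V2"
    using wm_inter[OF ds wm o] by blast
  obtain A B where AB: "opene_in X A" "opene_in X B" "A \<inter> B = {}" using ds_disjoint[OF ds] by blast
  obtain n where n: "n \<in> hitting_times X T U V" "n \<in> hitting_times X T A B"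
    using wm_pair[OF wm UV(1,2) AB(1,2)] by blast
  have "n \<noteq> 0" using n(2) AB(3) by (auto simp: hit_iff)
  then show ?thesis using n UV(3) by (metis IntE less_one not_le subsetD)
qed

lemma wm_triple:
  assumes ds: "dyn_system X T" and wm: "weakly_mixing X T"
    and o: "opene_in X G" "opene_in X U" "opene_in X V"
  shows "\<exists>U' V'. opene_in X U' \<and> opene_in X V' \<and>
     hitting_times X T U' V' \<subseteq> hitting_times X T G G \<inter> hitting_times X T V V \<inter> hitting_times X T U V"
proof -
  obtain U1 V1 where 1: "opene_in X U1" "opene_in X V1"
    "hitting_times X T U1 V1 \<subseteq> hitting_times X T G G \<inter> hitting_times X T V V"
    using wm_inter[OF ds wm o(1) o(1) o(3) o(3)] by blast
  obtain U2 V2 where 2: "opene_in X U2" "opene_in X V2"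
    "hitting_times X T U2 V2 \<subseteq> hitting_times X T U1 V1 \<inter> hitting_times X T U V"
    using wm_inter[OF ds wm 1(1,2) o(2) o(3)] by blast
  show ?thesis using 1 2 by blast
qed

lemma cbase:
  fixes X :: "'a::metric_space set"
  assumes "compact X"
  shows "\<exists>\<B>. countable \<B> \<and> (\<forall>W\<in>\<B>. opene_in X W) \<and> (\<forall>W. opene_in X W \<longrightarrow> (\<exists>W'\<in>\<B>. W' \<subseteq> W))"
proof -
  have "\<forall>k::nat. \<exists>F. finite F \<and> F \<subseteq> X \<and> X \<subseteq> (\<Union>c\<in>F. ball c (inverse (Suc k)))"
  proof
    fix k :: nat
    have "\<forall>c\<in>X. open (ball c (inverse (Suc k)))" by simp
    moreover have "X \<subseteq> (\<Union>c\<in>X. ball c (inverse (Suc k)))" by (auto intro!: bexI)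
    ultimately show "\<exists>F. finite F \<and> F \<subseteq> X \<and> X \<subseteq> (\<Union>c\<in>F. ball c (inverse (Suc k)))"
      using compactE_image[OF assms] by metis
  qed
  then obtain F where F: "\<And>k. finite (F k)" "\<And>k. F k \<subseteq> X"
    "\<And>k. X \<subseteq> (\<Union>c\<in>F k. ball c (inverse (Suc k)))" by metis
  define \<B> where "\<B> = (\<Union>k. (\<lambda>c. X \<inter> ball c (inverse (Suc k))) ` F k)"
  have "countable \<B>" unfolding \<B>_def
    by (rule countable_UN) (auto intro!: countable_image countable_finite F(1))
  moreover have "\<forall>W\<in>\<B>. opene_in X W"
    unfolding \<B>_def opene_in_def using F(2) by (force intro: openin_open_Int)
  moreover have "\<exists>W'\<in>\<B>. W' \<subseteq> W" if W: "opene_in X W" for W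
  proof -
    obtain y where y: "y \<in> W" using W by (auto simp: opene_in_def)
    obtain Ob where O: "open Ob" "W = X \<inter> Ob" using W by (auto simp: opene_in_def openin_open)
    obtain e where e: "e > 0" "ball y e \<subseteq> Ob" using O y by (meson IntD2 open_contains_ball)
    obtain k :: nat where k: "inverse (Suc k) < e/2" using e by (metis reals_Archimedean half_gt_zero)
    have "y \<in> X" using y O by auto
    then obtain c where c: "c \<in> F k" "y \<in> ball c (inverse (Suc k))" using F(3)[of k] by blast
    have "ball c (inverse (Suc k)) \<subseteq> ball y e"
    proof
      fix z assume "z \<in> ball c (inverse (Suc k))"
      then have "dist c z < inverse (Suc k)" by simp
      moreover have "dist y c < inverse (Suc k)" using c(2) by (simp add: dist_commute)
      ultimately have "dist y z < e" using k dist_triangle[of y z c] by linarith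
      then show "z \<in> ball y e" by simp
    qed
    then have "X \<inter> ball c (inverse (Suc k)) \<subseteq> W" using e O by auto
    moreover have "X \<inter> ball c (inverse (Suc k)) \<in> \<B>" using c unfolding \<B>_def by blast
    ultimately show ?thesis by blast
  qed
  ultimately show ?thesis by blast
qed


definition pc :: "'a set \<Rightarrow> ('a \<Rightarrow> 'a) \<Rightarrow> 'a \<Rightarrow> 'a set \<Rightarrow> 'a set \<Rightarrow> 'a set \<Rightarrow> nat" where
  "pc X T x U G V = (SOME p. p \<ge> 1 \<and> (T^^p) x \<in> G \<and> p \<in> hitting_times X T G G \<and>
      p \<in> hitting_times X T V V \<and> p \<in> hitting_times X T U V)"

primrec sGV :: "'a set \<Rightarrow> ('a \<Rightarrow> 'a) \<Rightarrow> 'a \<Rightarrow> 'a set \<Rightarrow> 'a set \<Rightarrow> 'a set \<Rightarrow> nat \<Rightarrow> 'a set \<times> 'a set" where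
  "sGV X T x U G V 0 = (G, V)"
| "sGV X T x U G V (Suc k) =
     (fst (sGV X T x U G V k) \<inter> {y\<in>X. (T^^pc X T x U (fst (sGV X T x U G V k)) (snd (sGV X T x U G V k))) y \<in> fst (sGV X T x U G V k)},
      snd (sGV X T x U G V k) \<inter> {y\<in>X. (T^^pc X T x U (fst (sGV X T x U G V k)) (snd (sGV X T x U G V k))) y \<in> snd (sGV X T x U G V k)})"

lemma IP_construct:
  assumes ds: "dyn_system X T"
    and key: "\<And>G V. opene_in X G \<Longrightarrow> opene_in X V \<Longrightarrow> \<exists>p. p \<ge> 1 \<and> (T^^p) x \<in> G \<and>
        p \<in> hitting_times X T G G \<and> p \<in> hitting_times X T V V \<and> p \<in> hitting_times X T U V"
    and G0: "opene_in X G0" and V0: "opene_in X V0"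
  shows "IP_set (visit_times T x G0 \<inter> hitting_times X T U V0)"
proof -
  define Gk where "Gk k = fst (sGV X T x U G0 V0 k)" for k
  define Vk where "Vk k = snd (sGV X T x U G0 V0 k)" for k
  define pk where "pk k = pc X T x U (Gk k) (Vk k)" for k
  have GS: "Gk (Suc k) = Gk k \<inter> {y\<in>X. (T^^pk k) y \<in> Gk k}" for k
    by (simp add: Gk_def Vk_def pk_def)
  have VS: "Vk (Suc k) = Vk k \<inter> {y\<in>X. (T^^pk k) y \<in> Vk k}" for k
    by (simp add: Gk_def Vk_def pk_def)
  have P: "opene_in X (Gk k) \<and> opene_in X (Vk k) \<and> pk k \<ge> 1 \<and> (T^^pk k) x \<in> Gk k \<and>
      pk k \<in> hitting_times X T (Gk k) (Gk k) \<and> pk k \<in> hitting_times X T (Vk k) (Vk k) \<and>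
      pk k \<in> hitting_times X T U (Vk k)" for k
  proof (induction k)
    case 0
    have o: "opene_in X (Gk 0)" "opene_in X (Vk 0)" using G0 V0 by (simp_all add: Gk_def Vk_def)
    show ?case using o someI_ex[OF key[OF o]] unfolding pk_def pc_def by blast
  next
    case (Suc k)
    have o: "opene_in X (Gk (Suc k))" "opene_in X (Vk (Suc k))"
      using Suc ds_pre[OF ds, of "Gk k" "pk k"] ds_pre[OF ds, of "Vk k" "pk k"]
      unfolding GS VS opene_in_def hit_iff by (auto intro!: openin_Int)
    show ?case using o someI_ex[OF key[OF o]] unfolding pk_def pc_def by blast
  qed
  have invG: "\<forall>I\<subseteq>{..<k}. \<forall>z\<in>Gk k. (T^^sum pk I) z \<in> G0" for k
  proof (induction k)
    case 0 then show ?case by (simp add: Gk_def)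
  next
    case (Suc k)
    show ?case
    proof (intro allI impI ballI)
      fix I z assume I: "I \<subseteq> {..<Suc k}" and z: "z \<in> Gk (Suc k)"
      show "(T^^sum pk I) z \<in> G0"
      proof (cases "k \<in> I")
        case False
        then have "I \<subseteq> {..<k}" using I by (auto simp: less_Suc_eq)
        then show ?thesis using Suc z GS by auto
      next
        case True
        have fin: "finite I" using I finite_subset by blast
        have "sum pk I = sum pk (I - {k}) + pk k" using sum.remove[OF fin True, of pk] by simp
        moreover have "I - {k} \<subseteq> {..<k}" using I by (auto simp: less_Suc_eq)
        moreover have "(T^^pk k) z \<in> Gk k" using z GS by auto
        ultimately show ?thesis using Suc by (simp add: funpow_add_app)
      qed
    qed
  qed
  have invV: "\<forall>I\<subseteq>{..<k}. \<forall>z\<in>Vk k. (T^^sum pk I) z \<in> V0" for k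
  proof (induction k)
    case 0 then show ?case by (simp add: Vk_def)
  next
    case (Suc k)
    show ?case
    proof (intro allI impI ballI)
      fix I z assume I: "I \<subseteq> {..<Suc k}" and z: "z \<in> Vk (Suc k)"
      show "(T^^sum pk I) z \<in> V0"
      proof (cases "k \<in> I")
        case False
        then have "I \<subseteq> {..<k}" using I by (auto simp: less_Suc_eq)
        then show ?thesis using Suc z VS by auto
      next
        case True
        have fin: "finite I" using I finite_subset by blast
        have "sum pk I = sum pk (I - {k}) + pk k" using sum.remove[OF fin True, of pk] by simp
        moreover have "I - {k} \<subseteq> {..<k}" using I by (auto simp: less_Suc_eq)
        moreover have "(T^^pk k) z \<in> Vk k" using z VS by auto
        ultimately show ?thesis using Suc by (simp add: funpow_add_app)
      qed
    qed
  qed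
  have "sum pk I \<in> visit_times T x G0 \<inter> hitting_times X T U V0" if I: "finite I" "I \<noteq> {}" for I
  proof -
    define k where "k = Max I"
    have kI: "k \<in> I" using I by (simp add: k_def)
    have sub: "I - {k} \<subseteq> {..<k}" using I Max_ge k_def by fastforce
    have sm: "sum pk I = sum pk (I - {k}) + pk k" using sum.remove[OF I(1) kI, of pk] by simp
    have "(T^^sum pk I) x \<in> G0" using invG[of k] sub P[of k] sm by (simp add: funpow_add_app)
    moreover obtain u where u: "u \<in> U" "u \<in> X" "(T^^pk k) u \<in> Vk k" using P[of k] by (auto simp: hit_iff)
    moreover have "(T^^sum pk I) u \<in> V0" using invV[of k] sub u sm by (simp add: funpow_add_app)
    ultimately show ?thesis by (auto simp: visit_times_def hit_iff)
  qed
  then show ?thesis unfolding IP_set_def using P by blast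
qed


lemma dense_meet:
  assumes "X' \<subseteq> X" "X \<subseteq> closure X'" "opene_in X W"
  shows "\<exists>x\<in>X'. x \<in> W"
proof -
  obtain Ob where O: "open Ob" "W = X \<inter> Ob" using assms(3) by (auto simp: opene_in_def openin_open)
  obtain a where a: "a \<in> W" using assms(3) by (auto simp: opene_in_def)
  have "Ob \<inter> closure X' \<noteq> {}" using a O assms(2) by auto
  then have "Ob \<inter> X' \<noteq> {}" using open_Int_closure_eq_empty[OF O(1)] by blast
  then show ?thesis using O assms(1) by blast
qed

lemma dir2:
  assumes ds: "dyn_system X T"
    and X': "X' \<subseteq> X" "X \<subseteq> closure X'"
    and hP: "\<forall>x\<in>X'. \<forall>G U V. opene_in X G \<longrightarrow> opene_in X U \<longrightarrow> opene_in X V \<longrightarrow>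
         IP_set (visit_times T x G \<inter> hitting_times X T U V)"
  shows "weakly_mixing X T"
  unfolding weakly_mixing_def
proof (intro allI impI)
  fix A B assume A: "opene_in (X \<times> X) A" and B: "opene_in (X \<times> X) B"
  have eq: "top_of_set (X \<times> X) = prod_topology (top_of_set X) (top_of_set X)" by simp
  obtain a1 a2 where "(a1, a2) \<in> A" using A by (auto simp: opene_in_def)
  then obtain U1 U2 where U: "openin (top_of_set X) U1" "openin (top_of_set X) U2" "a1 \<in> U1" "a2 \<in> U2" "U1 \<times> U2 \<subseteq> A"
    using A unfolding opene_in_def eq openin_prod_topology_alt by blast
  obtain b1 b2 where "(b1, b2) \<in> B" using B by (auto simp: opene_in_def)
  then obtain V1 V2 where V: "openin (top_of_set X) V1" "openin (top_of_set X) V2" "b1 \<in> V1" "b2 \<in> V2" "V1 \<times> V2 \<subseteq> B"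
    using B unfolding opene_in_def eq openin_prod_topology_alt by blast
  have o: "opene_in X U1" "opene_in X U2" "opene_in X V1" "opene_in X V2"
    using U V by (auto simp: opene_in_def)
  obtain x where x: "x \<in> X'" "x \<in> U1" using dense_meet[OF X' o(1)] by blast
  have "IP_set (visit_times T x V1 \<inter> hitting_times X T U2 V2)" using hP x o by blast
  then obtain n where n: "n \<in> visit_times T x V1" "n \<in> hitting_times X T U2 V2"
    unfolding IP_set_def by (metis IntE finite.emptyI finite.insertI insert_not_empty)
  obtain u where u: "u \<in> U2" "u \<in> X" "(T^^n) u \<in> V2" using n(2) by (auto simp: hit_iff)
  have "(x, u) \<in> A" "(x, u) \<in> X \<times> X" using x u U X' by auto
  moreover have "((\<lambda>(x, y). (T x, T y)) ^^ n) (x, u) \<in> B"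
    using n(1) u V by (auto simp: prod_iter visit_times_def)
  ultimately show "hitting_times (X \<times> X) (\<lambda>(x, y). (T x, T y)) A B \<noteq> {}"
    unfolding hitting_times_def by blast
qed

lemma dir1:
  assumes ds: "dyn_system X T" and wm: "weakly_mixing X T"
  shows "\<exists>X'. X' \<subseteq> X \<and> X \<subseteq> closure X' \<and> gdelta_in (top_of_set X) X' \<and>
      (\<forall>x\<in>X'. \<forall>G U V. opene_in X G \<longrightarrow> opene_in X U \<longrightarrow> opene_in X V \<longrightarrow>
         IP_set (visit_times T x G \<inter> hitting_times X T U V))"
proof -
  have cX: "compact X" using ds by (simp add: dyn_system_def)
  obtain \<B> where B: "countable \<B>" "\<forall>W\<in>\<B>. opene_in X W" "\<forall>W. opene_in X W \<longrightarrow> (\<exists>W'\<in>\<B>. W' \<subseteq> W)"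
    using cbase[OF cX] by blast
  define Ob where "Ob = (\<lambda>(G, U, V). {x\<in>X. \<exists>n\<ge>1. (T^^n) x \<in> G \<and> n \<in> hitting_times X T U V})"
  define \<G> where "\<G> = Ob ` (\<B> \<times> \<B> \<times> \<B>)"
  have cG: "countable \<G>" unfolding \<G>_def using B(1) by auto
  have openG: "openin (top_of_set X) S" if SG: "S \<in> \<G>" for S
  proof -
    obtain G U V where GUV: "G \<in> \<B>" "S = Ob (G, U, V)" using SG \<G>_def by auto
    have "S = (\<Union>n\<in>{n. n \<ge> 1 \<and> n \<in> hitting_times X T U V}. {x\<in>X. (T^^n) x \<in> G})"
      using GUV by (auto simp: Ob_def)
    moreover have "openin (top_of_set X) {x\<in>X. (T^^n) x \<in> G}" for n
      using ds_pre[OF ds] B(2) GUV(1) by (auto simp: opene_in_def)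
    ultimately show ?thesis by (auto intro!: openin_Union)
  qed
  have denseG: "top_of_set X closure_of S = topspace (top_of_set X)" if SG: "S \<in> \<G>" for S
  proof -
    obtain G U V where GUV: "G \<in> \<B>" "U \<in> \<B>" "V \<in> \<B>" "S = Ob (G, U, V)" using SG \<G>_def by auto
    have oS: "S \<subseteq> X" using GUV by (auto simp: Ob_def)
    have "y \<in> top_of_set X closure_of S" if y: "y \<in> X" for y
      unfolding closure_of_def
    proof (clarsimp simp: y)
      fix W assume W: "openin (top_of_set X) W" "y \<in> W"
      then have oW: "opene_in X W" by (auto simp: opene_in_def)
      obtain n where n: "n \<ge> 1" "n \<in> hitting_times X T W G" "n \<in> hitting_times X T U V"
        using wm_pos[OF ds wm oW] B(2) GUV by blast
      then obtain w where "w \<in> W" "w \<in> X" "(T^^n) w \<in> G" by (auto simp: hit_iff)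
      then have "w \<in> S \<and> w \<in> W" using n GUV by (auto simp: Ob_def)
      then show "\<exists>w\<in>S. w \<in> W" by blast
    qed
    moreover have "top_of_set X closure_of S \<subseteq> X"
      by (metis closure_of_subset_topspace topspace_euclidean_subtopology)
    ultimately show ?thesis by auto
  qed
  have reg: "locally_compact_space (top_of_set X) \<and> regular_space (top_of_set X)"
    using cX by (simp add: compact_imp_locally_compact_space compact_space_subtopology
        regular_space_subtopology regular_space_euclidean)
  have Bc: "top_of_set X closure_of \<Inter>\<G> = topspace (top_of_set X)"
    using Baire_category[of "top_of_set X" \<G>] reg cG openG denseG by blast
  define X' where "X' = X \<inter> \<Inter>\<G>"
  have "X' \<subseteq> X" by (auto simp: X'_def)
  moreover have "X \<subseteq> closure X'"
    using Bc by (simp add: closure_of_subtopology X'_def) blast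
  moreover have "gdelta_in (top_of_set X) X'"
  proof -
    have "X' = \<Inter>(insert X \<G>)" by (auto simp: X'_def)
    moreover have "gdelta_in (top_of_set X) S" if "S \<in> insert X \<G>" for S
      using that openG open_imp_gdelta_in by (metis insertE openin_topspace topspace_euclidean_subtopology)
    ultimately show ?thesis using gdelta_in_Inter[of "insert X \<G>"] cG by auto
  qed
  moreover have "IP_set (visit_times T x G \<inter> hitting_times X T U V)"
    if x: "x \<in> X'" and o: "opene_in X G" "opene_in X U" "opene_in X V" for x G U V
  proof (rule IP_construct[OF ds _ o(1) o(3)])
    fix G1 V1 assume o1: "opene_in X G1" "opene_in X V1"
    obtain U' V' where UV': "opene_in X U'" "opene_in X V'"
      "hitting_times X T U' V' \<subseteq> hitting_times X T G1 G1 \<inter> hitting_times X T V1 V1 \<inter> hitting_times X T U V1"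
      using wm_triple[OF ds wm o1(1) o(2) o1(2)] by blast
    obtain G2 where G2: "G2 \<in> \<B>" "G2 \<subseteq> G1" using B(3) o1(1) by blast
    obtain U2 where U2: "U2 \<in> \<B>" "U2 \<subseteq> U'" using B(3) UV'(1) by blast
    obtain V2 where V2: "V2 \<in> \<B>" "V2 \<subseteq> V'" using B(3) UV'(2) by blast
    have "x \<in> Ob (G2, U2, V2)" using x G2 U2 V2 by (auto simp: X'_def \<G>_def)
    then obtain p where p: "p \<ge> 1" "(T^^p) x \<in> G2" "p \<in> hitting_times X T U2 V2"
      by (auto simp: Ob_def)
    have "p \<in> hitting_times X T U' V'" using p(3) U2 V2 by (auto simp: hit_iff)
    then show "\<exists>p. p \<ge> 1 \<and> (T^^p) x \<in> G1 \<and> p \<in> hitting_times X T G1 G1 \<and>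
        p \<in> hitting_times X T V1 V1 \<and> p \<in> hitting_times X T U V1"
      using p G2 UV'(3) by blast
  qed
  ultimately show ?thesis by blast
qed

theorem proposition5p4:
  fixes X :: "'a::metric_space set" and T :: "'a \<Rightarrow> 'a"
  assumes "dyn_system X T"
  shows "weakly_mixing X T \<longleftrightarrow>
    (\<exists>X'. X' \<subseteq> X \<and> X \<subseteq> closure X' \<and> gdelta_in (top_of_set X) X' \<and>
      (\<forall>x\<in>X'. \<forall>G U V. opene_in X G \<longrightarrow> opene_in X U \<longrightarrow> opene_in X V \<longrightarrow>
         IP_set (visit_times T x G \<inter> hitting_times X T U V)))"
  using dir1[OF assms] dir2[OF assms] by blast

end
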